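(* Consider the Bregman proximal augmented Lagrangian method described in the context, with $\psi,\phi$ Legendre, and define the ergodic iterates $\breve s^K=\frac{\sum_{k=0}^K\sigma_ks^k}{\sum_{k=0}^K\sigma_k}$, $\breve y^K=\frac{\sum_{k=0}^K\sigma_ky^{k+1}}{\sum_{k=0}^K\sigma_k}$. Then for every $x\in\operatorname{dom}\psi$, $y\in\operatorname{dom}\phi$ and $K\ge0$, $$L(\breve s^K,y)-L(x,\breve y^K)\le\frac{1}{\sum_{k=0}^K\sigma_k}\big(D_\psi(x,x^0)+D_\phi(y,y^0)\big).$$ If in addition $\operatorname{dom}f\subseteq\operatorname{cl}\operatorname{dom}\psi$ and $\operatorname{dom}g^*\subseteq\operatorname{cl}\operatorname{dom}\phi$, then every limit point $(\breve s^\infty,\breve y^\infty)$ of $\{(\breve s^K,\breve y^K)\}_{K\ge0}$ is a saddle point of $L$, i.e. $L(\breve s^\infty,y)\le L(x,\breve y^\infty)$ for all $x\in\mathbb{R}^n$, $y\in\mathbb{R}^m$.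
   Context: Let $f\in\Gamma_0(\mathbb{R}^n)$, $g\in\Gamma_0(\mathbb{R}^m)$ (proper lsc convex), $A\in\mathbb{R}^{m\times n}$, $b\in\mathbb{R}^m$, $\mathcal{A}(x)=Ax-b$. $L(x,y)=f(x)+\langle\mathcal{A}(x),y\rangle-g^*(y)$; KKT operator $T(x,y)=(\partial f(x)+A^\top y)\times(\partial g^*(y)+b-Ax)$ (maximal monotone). A function $h\in\Gamma_0$ is Legendre if essentially smooth ($\operatorname{int}\operatorname{dom}h\ne\emptyset$, differentiable there, $\|\nabla h(z^\nu)\|\to\infty$ whenever $\operatorname{int}\operatorname{dom}h\ni z^\nu\to z\in\operatorname{bdry}\operatorname{dom}h$) and essentially strictly convex (strictly convex on every convex subset of $\operatorname{dom}\partial h$); $\nabla h^*$ is the inverse of $\nabla h$ on interiors of domains. $D_h(a,c)=h(a)-h(c)-\langle\nabla h(c),a-c\rangle$ for $a\in\operatorname{dom}h$, $c\in\operatorname{int}\operatorname{dom}h$, $+\infty$ otherwise. Let $\psi\in\Gamma_0(\mathbb{R}^n)$, $\phi\in\Gamma_0(\mathbb{R}^m)$ be Legendre, $\Phi(x,y)=\psi(x)+\phi(y)$, and assume $\operatorname{int}\operatorname{dom}\Phi\cap\operatorname{dom}T\ne\emptyset$ (in particular $\operatorname{dom}f\cap\operatorname{int}\operatorname{dom}\psi\ne\emptyset$ and $\operatorname{dom}g^*\cap\operatorname{int}\operatorname{dom}\phi\ne\emptyset$). Bregman proximal augmented Lagrangian method: given $x^0\in\operatorname{int}\operatorname{dom}\psi$,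 $y^0\in\operatorname{int}\operatorname{dom}\phi$, step sizes $\sigma_k\ge\sigma>0$ and $\rho_k\in[0,1)$, it generates $s^k\in\operatorname{dom}\psi$, $x^{k+1},y^{k+1},v^k,u^k$ with $(v^k,u^k)\in T(s^k,y^{k+1})$, $x^{k+1}=\nabla\psi^*(\nabla\psi(x^k)-\sigma_kv^k)\in\operatorname{int}\operatorname{dom}\psi$, $y^{k+1}=\nabla\phi^*(\nabla\phi(y^k)-\sigma_ku^k)\in\operatorname{int}\operatorname{dom}\phi$, and $D_\psi(s^k,x^{k+1})\le\rho_k\big(D_\psi(s^k,x^k)+D_\phi(y^{k+1},y^k)\big)$. *)

theory Defs
  imports "HOL-Analysis.Analysis"
begin

definition edom :: "('a \<Rightarrow> ereal) \<Rightarrow> 'a set" where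
  "edom h = {x. h x < \<infinity>}"

definition proper_fun :: "('a \<Rightarrow> ereal) \<Rightarrow> bool" where
  "proper_fun h \<longleftrightarrow> (\<forall>x. h x > -\<infinity>) \<and> (\<exists>x. h x < \<infinity>)"

definition convex_fun :: "('a::real_vector \<Rightarrow> ereal) \<Rightarrow> bool" where
  "convex_fun h \<longleftrightarrow> (\<forall>x y t. 0 \<le> t \<and> t \<le> 1 \<longrightarrow>
      h ((1 - t) *\<^sub>R x + t *\<^sub>R y) \<le> ereal (1 - t) * h x + ereal t * h y)"

definition lsc_fun :: "('a::topological_space \<Rightarrow> ereal) \<Rightarrow> bool" where
  "lsc_fun h \<longleftrightarrow> (\<forall>c. closed {x. h x \<le> c})"

definition Gamma0 :: "('a::real_normed_vector \<Rightarrow> ereal) \<Rightarrow> bool" where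
  "Gamma0 h \<longleftrightarrow> proper_fun h \<and> convex_fun h \<and> lsc_fun h"

definition conj_fun :: "('a::real_inner \<Rightarrow> ereal) \<Rightarrow> 'a \<Rightarrow> ereal" where
  "conj_fun h y = (SUP x. ereal (inner x y) - h x)"

definition subdiff :: "('a::real_inner \<Rightarrow> ereal) \<Rightarrow> 'a \<Rightarrow> 'a set" where
  "subdiff h x = {v. h x < \<infinity> \<and> (\<forall>z. h z \<ge> h x + ereal (inner v (z - x)))}"

definition grad :: "('a::real_inner \<Rightarrow> ereal) \<Rightarrow> 'a \<Rightarrow> 'a" where
  "grad h z = (SOME D. GDERIV (\<lambda>w. real_of_ereal (h w)) z :> D)"

definition ess_smooth :: "('a::real_inner \<Rightarrow> ereal) \<Rightarrow> bool" where
  "ess_smooth h \<longleftrightarrow> interior (edom h) \<noteq> {}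
     \<and> (\<forall>z \<in> interior (edom h). \<exists>D. GDERIV (\<lambda>w. real_of_ereal (h w)) z :> D)
     \<and> (\<forall>zs z. (\<forall>k. zs k \<in> interior (edom h)) \<longrightarrow> zs \<longlonglongrightarrow> z \<longrightarrow> z \<in> frontier (edom h)
           \<longrightarrow> filterlim (\<lambda>k. norm (grad h (zs k))) at_top sequentially)"

definition ess_strictly_convex :: "('a::real_inner \<Rightarrow> ereal) \<Rightarrow> bool" where
  "ess_strictly_convex h \<longleftrightarrow> (\<forall>C. convex C \<and> C \<subseteq> {x. subdiff h x \<noteq> {}} \<longrightarrow>
     (\<forall>x\<in>C. \<forall>y\<in>C. \<forall>t. x \<noteq> y \<and> 0 < t \<and> t < 1 \<longrightarrow>
        h ((1 - t) *\<^sub>R x + t *\<^sub>R y) < ereal (1 - t) * h x + ereal t * h y))"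

definition legendre :: "('a::real_inner \<Rightarrow> ereal) \<Rightarrow> bool" where
  "legendre h \<longleftrightarrow> Gamma0 h \<and> ess_smooth h \<and> ess_strictly_convex h"

definition bregman :: "('a::real_inner \<Rightarrow> ereal) \<Rightarrow> 'a \<Rightarrow> 'a \<Rightarrow> ereal" where
  "bregman h a c = (if a \<in> edom h \<and> c \<in> interior (edom h)
      then h a - h c - ereal (inner (grad h c) (a - c)) else \<infinity>)"

text \<open>Lagrangian L(x,y) = f(x) + <Ax-b,y> - g*(y), with the standard convention
  L(x,y) = +\<infinity> for x outside dom f.\<close>

definition lagr :: "(real^'n \<Rightarrow> ereal) \<Rightarrow> (real^'m \<Rightarrow> ereal) \<Rightarrow> real^'n^'m \<Rightarrow> real^'m
    \<Rightarrow> real^'n \<Rightarrow> real^'m \<Rightarrow> ereal" where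
  "lagr f g A b x y = (if f x = \<infinity> then \<infinity>
      else f x + ereal (inner (A *v x - b) y) - conj_fun g y)"

definition kkt :: "(real^'n \<Rightarrow> ereal) \<Rightarrow> (real^'m \<Rightarrow> ereal) \<Rightarrow> real^'n^'m \<Rightarrow> real^'m
    \<Rightarrow> real^'n \<Rightarrow> real^'m \<Rightarrow> ((real^'n) \<times> (real^'m)) set" where
  "kkt f g A b x y = {(v, u). v - transpose A *v y \<in> subdiff f x
      \<and> u - (b - A *v x) \<in> subdiff (conj_fun g) y}"

end

theory Submission
  imports Defs
begin


lemma proper_fin: "proper_fun h \<Longrightarrow> x \<in> edom h \<Longrightarrow> h x = ereal (real_of_ereal (h x))"
  unfolding proper_fun_def edom_def
  by (metis mem_Collect_eq real_of_ereal.simps(1) ereal_cases not_infty_ereal less_irrefl)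

lemma convex_fun_real:
  assumes c: "convex_fun h" and p: "proper_fun h"
  shows "convex (edom h)" "convex_on (edom h) (\<lambda>x. real_of_ereal (h x))"
proof -
  have key: "h ((1 - t) *\<^sub>R x + t *\<^sub>R y) = ereal (real_of_ereal (h ((1 - t) *\<^sub>R x + t *\<^sub>R y)))
     \<and> real_of_ereal (h ((1 - t) *\<^sub>R x + t *\<^sub>R y)) \<le> (1-t) * real_of_ereal (h x) + t * real_of_ereal (h y)"
    if xy: "x \<in> edom h" "y \<in> edom h" and tt: "0 \<le> t" "t \<le> 1" for x y t
  proof -
    obtain a b where a: "h x = ereal a" and b: "h y = ereal b"
      using proper_fin[OF p] xy by metis
    have le: "h ((1 - t) *\<^sub>R x + t *\<^sub>R y) \<le> ereal ((1-t)*a + t*b)"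
      using c tt unfolding convex_fun_def by (metis a b times_ereal.simps(1) plus_ereal.simps(1))
    have "h ((1 - t) *\<^sub>R x + t *\<^sub>R y) > -\<infinity>" using p unfolding proper_fun_def by auto
    with le obtain r where r: "h ((1 - t) *\<^sub>R x + t *\<^sub>R y) = ereal r"
      by (cases "h ((1 - t) *\<^sub>R x + t *\<^sub>R y)") auto
    show ?thesis using le r a b by simp
  qed
  show "convex (edom h)"
    unfolding convex_alt
  proof (intro ballI allI impI)
    fix x y and u :: real assume "x \<in> edom h" "y \<in> edom h" "0 \<le> u \<and> u \<le> 1"
    then show "(1 - u) *\<^sub>R x + u *\<^sub>R y \<in> edom h"
      using key[of x y u] unfolding edom_def by (metis mem_Collect_eq less_ereal.simps(4))
  qed
  show "convex_on (edom h) (\<lambda>x. real_of_ereal (h x))"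
    unfolding convex_on_def
  proof (intro conjI ballI allI impI)
    show "convex (edom h)" by fact
    fix x y and u v :: real assume "x \<in> edom h" "y \<in> edom h" "0 \<le> u" "0 \<le> v" "u + v = 1"
    then show "real_of_ereal (h (u *\<^sub>R x + v *\<^sub>R y)) \<le> u * real_of_ereal (h x) + v * real_of_ereal (h y)"
      using key[of x y v] by (simp add: eq_diff_eq[symmetric])
  qed
qed

lemma lsc_ev:
  assumes "lsc_fun h" "z \<longlonglongrightarrow> z0" "a < h z0"
  shows "eventually (\<lambda>K. a < h (z K)) sequentially"
proof -
  have "open (- {x. h x \<le> a})" using assms(1) unfolding lsc_fun_def by auto
  moreover have "z0 \<in> - {x. h x \<le> a}" using assms(3) by auto
  ultimately have "eventually (\<lambda>K. z K \<in> - {x. h x \<le> a}) sequentially"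
    using assms(2) topological_tendstoD by blast
  then show ?thesis by (auto elim: eventually_mono)
qed

lemma eps_lemma:
  fixes a b M :: real
  assumes "\<And>t. 0 < t \<Longrightarrow> t \<le> 1 \<Longrightarrow> a \<le> b + t * M"
  shows "a \<le> b"
proof (rule ccontr)
  assume "\<not> a \<le> b"
  define t where "t = min 1 ((a - b) / (\<bar>M\<bar> + 1))"
  have t: "0 < t" "t \<le> 1" using \<open>\<not> a \<le> b\<close> by (auto simp: t_def)
  have "t * M \<le> t * \<bar>M\<bar>" using t by (simp add: mult_left_mono)
  also have "\<dots> < t * (\<bar>M\<bar> + 1)" using t by simp
  also have "\<dots> \<le> a - b"
  proof -
    have "t \<le> (a-b)/(\<bar>M\<bar>+1)" by (simp add: t_def)
    then show ?thesis by (subst (asm) pos_le_divide_eq) auto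
  qed
  finally show False using assms[OF t] by simp
qed

lemma inner_transpose:
  fixes A :: "real^'n^'m"
  shows "inner (transpose A *v y) w = inner y (A *v w)"
  by (simp add: dot_lmul_matrix)

lemma conj_gt: "proper_fun g \<Longrightarrow> conj_fun g y > -\<infinity>"
proof -
  assume "proper_fun g"
  then obtain x where x: "g x < \<infinity>" unfolding proper_fun_def by auto
  have "ereal (inner x y) - g x \<le> conj_fun g y" unfolding conj_fun_def by (rule SUP_upper) auto
  moreover have "ereal (inner x y) - g x > -\<infinity>" using x by (cases "g x") auto
  ultimately show ?thesis by auto
qed

lemma conj_props:
  assumes p: "proper_fun g"
  shows "convex (edom (conj_fun g))" "convex_on (edom (conj_fun g)) (\<lambda>y. real_of_ereal (conj_fun g y))"
    "lsc_fun (conj_fun g)"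
proof -
  have key: "conj_fun g ((1 - t) *\<^sub>R y1 + t *\<^sub>R y2) \<le> ereal ((1-t) * c1 + t * c2)"
    if "conj_fun g y1 = ereal c1" "conj_fun g y2 = ereal c2" "0 \<le> t" "t \<le> 1" for y1 y2 t c1 c2
    unfolding conj_fun_def
  proof (rule SUP_least)
    fix x
    show "ereal (inner x ((1 - t) *\<^sub>R y1 + t *\<^sub>R y2)) - g x \<le> ereal ((1 - t) * c1 + t * c2)"
    proof (cases "g x")
      case (real r)
      have "ereal (inner x y1) - g x \<le> conj_fun g y1" "ereal (inner x y2) - g x \<le> conj_fun g y2"
        unfolding conj_fun_def by (rule SUP_upper; simp)+
      then have "inner x y1 - r \<le> c1" "inner x y2 - r \<le> c2" using that real by auto
      then have "(1-t) * (inner x y1 - r) + t * (inner x y2 - r) \<le> (1-t) * c1 + t * c2"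
        using that by (intro add_mono mult_left_mono) auto
      then show ?thesis using real by (simp add: inner_add_right algebra_simps)
    qed (use p in \<open>auto simp: proper_fun_def\<close>)
  qed
  have fin: "conj_fun g y = ereal (real_of_ereal (conj_fun g y))" if "y \<in> edom (conj_fun g)" for y
    using that conj_gt[OF p, of y] unfolding edom_def by (cases "conj_fun g y") auto
  show cv: "convex (edom (conj_fun g))"
    unfolding convex_alt
  proof (intro ballI allI impI)
    fix x y and u :: real assume "x \<in> edom (conj_fun g)" "y \<in> edom (conj_fun g)" "0 \<le> u \<and> u \<le> 1"
    then show "(1 - u) *\<^sub>R x + u *\<^sub>R y \<in> edom (conj_fun g)"
      using key[OF fin fin, of x y u] unfolding edom_def by (auto intro: le_less_trans)
  qed
  show "convex_on (edom (conj_fun g)) (\<lambda>y. real_of_ereal (conj_fun g y))"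
    unfolding convex_on_def
  proof (intro conjI ballI allI impI)
    show "convex (edom (conj_fun g))" by fact
    fix x y and u v :: real assume xy: "x \<in> edom (conj_fun g)" "y \<in> edom (conj_fun g)" "0 \<le> u" "0 \<le> v" "u + v = 1"
    have "conj_fun g (u *\<^sub>R x + v *\<^sub>R y) \<le> ereal (u * real_of_ereal (conj_fun g x) + v * real_of_ereal (conj_fun g y))"
      using key[OF fin fin, of x y v] xy by (simp add: eq_diff_eq[symmetric])
    moreover have "conj_fun g (u *\<^sub>R x + v *\<^sub>R y) > -\<infinity>" by (rule conj_gt[OF p])
    ultimately show "real_of_ereal (conj_fun g (u *\<^sub>R x + v *\<^sub>R y)) \<le> u * real_of_ereal (conj_fun g x) + v * real_of_ereal (conj_fun g y)"
      by (cases "conj_fun g (u *\<^sub>R x + v *\<^sub>R y)") auto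
  qed
  show "lsc_fun (conj_fun g)"
    unfolding lsc_fun_def
  proof
    fix c
    have eq: "{y. conj_fun g y \<le> c} = (\<Inter>x. {y. ereal (inner x y) - g x \<le> c})"
      unfolding conj_fun_def by (auto simp: SUP_le_iff)
    have "closed {y. ereal (inner x y) - g x \<le> c}" for x
    proof (cases "g x")
      case (real r)
      have e: "(\<lambda>y. ereal (inner x y) - g x) = (\<lambda>y. ereal (inner x y - r))" using real by auto
      have "continuous_on UNIV (\<lambda>y. ereal (inner x y) - g x)"
        unfolding e by (intro continuous_on_ereal continuous_intros)
      then show ?thesis by (intro closed_Collect_le continuous_on_const) 
    qed auto
    then show "closed {y. conj_fun g y \<le> c}" unfolding eq by auto
  qed
qed

lemma grad_ineq:
  assumes cf: "convex_fun h" and p: "proper_fun h" and c: "c \<in> interior (edom h)"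
    and a: "a \<in> edom h" and d: "GDERIV (\<lambda>w. real_of_ereal (h w)) c :> D"
  shows "real_of_ereal (h c) + inner D (a - c) \<le> real_of_ereal (h a)"
proof (cases "a = c")
  case True then show ?thesis by simp
next
  case False
  define H where "H = (\<lambda>w. real_of_ereal (h w))"
  have cvx: "convex (edom h)" and cvH: "convex_on (edom h) H"
    using convex_fun_real[OF cf p] by (auto simp: H_def)
  obtain e where e: "e > 0" "ball c e \<subseteq> edom h" using c by (auto simp: mem_interior)
  have na: "norm (a - c) > 0" using False by simp
  define \<delta> where "\<delta> = e / (2 * norm (a - c))"
  have \<delta>: "\<delta> > 0" using e na by (simp add: \<delta>_def)
  define l where "l = (\<lambda>t::real. c + t *\<^sub>R (a - c))"
  have cE: "c \<in> edom h" using c interior_subset by blast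
  have lA: "l t \<in> edom h" if "t \<in> {-\<delta>..1}" for t
  proof (cases "t \<ge> 0")
    case True
    have "l t = (1 - t) *\<^sub>R c + t *\<^sub>R a" by (simp add: l_def algebra_simps)
    then show ?thesis using cvx cE a True that unfolding convex_alt by auto
  next
    case False
    have "dist c (l t) = \<bar>t\<bar> * norm (a - c)" by (simp add: l_def dist_norm)
    also have "\<dots> \<le> \<delta> * norm (a - c)" using False that by (intro mult_right_mono) auto
    also have "\<dots> < e" using na e by (simp add: \<delta>_def)
    finally show ?thesis using e by auto
  qed
  have cvphi: "convex_on {-\<delta>..1} (H \<circ> l)"
    unfolding convex_on_def
  proof (intro conjI ballI allI impI)
    show "convex {-\<delta>..1}" by simp
    fix x y and u v :: real assume xy: "x \<in> {-\<delta>..1}" "y \<in> {-\<delta>..1}" "0 \<le> u" "0 \<le> v" "u + v = 1"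
    have "l (u *\<^sub>R x + v *\<^sub>R y) = (u + v) *\<^sub>R c + (u * x + v * y) *\<^sub>R (a - c)"
      using xy(5) by (simp add: l_def)
    also have "\<dots> = u *\<^sub>R l x + v *\<^sub>R l y"
      by (simp add: l_def algebra_simps)
    finally have "(H \<circ> l) (u *\<^sub>R x + v *\<^sub>R y) = H (u *\<^sub>R l x + v *\<^sub>R l y)" by simp
    also have "\<dots> \<le> u * H (l x) + v * H (l y)"
      using cvH lA[OF xy(1)] lA[OF xy(2)] xy(3-5) unfolding convex_on_def by blast
    finally show "(H \<circ> l) (u *\<^sub>R x + v *\<^sub>R y) \<le> u * (H \<circ> l) x + v * (H \<circ> l) y" by simp
  qed
  have dl: "(l has_derivative (\<lambda>t. t *\<^sub>R (a - c))) (at 0)"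
    unfolding l_def by (auto intro!: derivative_eq_intros)
  have dH: "(H has_derivative (\<lambda>h. inner h D)) (at (l 0))"
    using d by (simp add: l_def H_def gderiv_def)
  have "((H \<circ> l) has_derivative ((\<lambda>h. inner h D) \<circ> (\<lambda>t. t *\<^sub>R (a - c)))) (at 0)"
    by (rule diff_chain_at[OF dl dH])
  moreover have "((\<lambda>h. inner h D) \<circ> (\<lambda>t. t *\<^sub>R (a - c))) = (*) (inner D (a - c))"
    by (auto simp: inner_commute)
  ultimately have "((H \<circ> l) has_field_derivative (inner D (a - c))) (at 0)"
    by (simp add: has_field_derivative_def)
  then have der: "((H \<circ> l) has_field_derivative (inner D (a - c))) (at 0 within {-\<delta>..1})"
    by (rule has_field_derivative_at_within)
  have "(H \<circ> l) 1 - (H \<circ> l) 0 \<ge> inner D (a - c) * (1 - 0)"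
    by (rule convex_on_imp_above_tangent[OF cvphi _ _ _ der]) (use \<delta> in auto)
  then show ?thesis by (simp add: l_def H_def)
qed

lemma ereal_split:
  fixes x y :: ereal
  assumes "x > -\<infinity>" "y > -\<infinity>" "ereal c < x + y"
  shows "\<exists>\<alpha> \<beta>. ereal \<alpha> < x \<and> ereal \<beta> < y \<and> c < \<alpha> + \<beta>"
proof (cases x)
  case (real a) note xa = this
  show ?thesis
  proof (cases y)
    case (real b)
    have cab: "c < a + b" using assms(3) xa real by simp
    define d where "d = (a + b - c) / 4"
    have d: "d > 0" "c < (a - d) + (b - d)" using cab by (auto simp: d_def field_simps)
    have "ereal (a - d) < x" "ereal (b - d) < y" using d xa real by auto
    then show ?thesis using d by blast
  next
    case PInf then show ?thesis using xa
    proof -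
      have "ereal (a - 1) < x" "ereal (c - a + 2) < y" "c < (a - 1) + (c - a + 2)" using xa PInf by auto
      then show ?thesis by blast
    qed
  qed (use assms in auto)
next
  case PInf note xi = this
  show ?thesis
  proof (cases y)
    case (real b)
    then show ?thesis using xi
    proof -
      have "ereal (c - b + 2) < x" "ereal (b - 1) < y" "c < (c - b + 2) + (b - 1)" using xi real by auto
      then show ?thesis by blast
    qed
  next
    case PInf then show ?thesis using xi
    proof -
      have "ereal (c + 1) < x" "ereal 0 < y" "c < (c + 1) + 0" using xi PInf by auto
      then show ?thesis by blast
    qed
  qed (use assms in auto)
qed (use assms in auto)

lemma grad_ok:
  assumes a: "ess_smooth h" and b: "z \<in> interior (edom h)"
  shows "GDERIV (\<lambda>w. real_of_ereal (h w)) z :> grad h z"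
proof -
  have "\<exists>D. GDERIV (\<lambda>w. real_of_ereal (h w)) z :> D"
    using bspec[OF conjunct1[OF conjunct2[OF a[unfolded ess_smooth_def]]] b] .
  then show ?thesis unfolding grad_def by (rule someI_ex)
qed


theorem mainTheorem16:
  fixes f :: "real^'n \<Rightarrow> ereal" and g :: "real^'m \<Rightarrow> ereal"
    and A :: "real^'n^'m" and b :: "real^'m"
    and \<psi> :: "real^'n \<Rightarrow> ereal" and \<phi> :: "real^'m \<Rightarrow> ereal"
    and s xx v :: "nat \<Rightarrow> real^'n" and yy u :: "nat \<Rightarrow> real^'m"
    and \<sigma> \<rho> :: "nat \<Rightarrow> real" and \<sigma>0 :: real
  assumes f: "Gamma0 f" and g: "Gamma0 g"
    and leg_psi: "legendre \<psi>" and leg_phi: "legendre \<phi>"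
    and qual: "\<exists>x y. x \<in> interior (edom \<psi>) \<and> y \<in> interior (edom \<phi>) \<and> kkt f g A b x y \<noteq> {}"
    and x0: "xx 0 \<in> interior (edom \<psi>)" and y0: "yy 0 \<in> interior (edom \<phi>)"
    and sigma0: "\<sigma>0 > 0" and sigma: "\<And>k. \<sigma> k \<ge> \<sigma>0"
    and rho: "\<And>k. 0 \<le> \<rho> k \<and> \<rho> k < 1"
    and s_dom: "\<And>k. s k \<in> edom \<psi>"
    and incl: "\<And>k. (v k, u k) \<in> kkt f g A b (s k) (yy (Suc k))"
    and x_int: "\<And>k. xx (Suc k) \<in> interior (edom \<psi>)"
    and x_upd: "\<And>k. grad \<psi> (xx (Suc k)) = grad \<psi> (xx k) - \<sigma> k *\<^sub>R v k"
    and y_int: "\<And>k. yy (Suc k) \<in> interior (edom \<phi>)"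
    and y_upd: "\<And>k. grad \<phi> (yy (Suc k)) = grad \<phi> (yy k) - \<sigma> k *\<^sub>R u k"
    and inexact: "\<And>k. bregman \<psi> (s k) (xx (Suc k))
        \<le> ereal (\<rho> k) * (bregman \<psi> (s k) (xx k) + bregman \<phi> (yy (Suc k)) (yy k))"
  defines "sb \<equiv> \<lambda>K. (1 / (\<Sum>k\<le>K. \<sigma> k)) *\<^sub>R (\<Sum>k\<le>K. \<sigma> k *\<^sub>R s k)"
    and "yb \<equiv> \<lambda>K. (1 / (\<Sum>k\<le>K. \<sigma> k)) *\<^sub>R (\<Sum>k\<le>K. \<sigma> k *\<^sub>R yy (Suc k))"
  shows "(\<forall>x \<in> edom \<psi>. \<forall>y \<in> edom \<phi>. \<forall>K.
            lagr f g A b (sb K) y - lagr f g A b x (yb K)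
              \<le> (bregman \<psi> x (xx 0) + bregman \<phi> y (yy 0)) / ereal (\<Sum>k\<le>K. \<sigma> k))
       \<and> ((edom f \<subseteq> closure (edom \<psi>) \<and> edom (conj_fun g) \<subseteq> closure (edom \<phi>)) \<longrightarrow>
          (\<forall>p q. (\<exists>r. strict_mono r \<and> (\<lambda>K. (sb (r K), yb (r K))) \<longlonglongrightarrow> (p, q)) \<longrightarrow>
             (\<forall>x y. lagr f g A b p y \<le> lagr f g A b x q)))"
proof -
  have pf: "proper_fun f" and cf: "convex_fun f" and lf: "lsc_fun f" using f by (auto simp: Gamma0_def)
  have pg: "proper_fun g" using g by (auto simp: Gamma0_def)
  have ppsi: "proper_fun \<psi>" and cpsi: "convex_fun \<psi>" and sspsi: "ess_smooth \<psi>"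
    using leg_psi by (auto simp: legendre_def Gamma0_def)
  have pphi: "proper_fun \<phi>" and cphi: "convex_fun \<phi>" and ssphi: "ess_smooth \<phi>"
    using leg_phi by (auto simp: legendre_def Gamma0_def)
  define F where "F = (\<lambda>x. real_of_ereal (f x))"
  define G where "G = (\<lambda>y. real_of_ereal (conj_fun g y))"
  define Ps where "Ps = (\<lambda>x. real_of_ereal (\<psi> x))"
  define Ph where "Ph = (\<lambda>x. real_of_ereal (\<phi> x))"
  define Dp where "Dp = (\<lambda>a c. Ps a - Ps c - inner (grad \<psi> c) (a - c))"
  define Dq where "Dq = (\<lambda>a c. Ph a - Ph c - inner (grad \<phi> c) (a - c))"
  define S where "S = (\<lambda>K. \<Sum>k\<le>K. \<sigma> k)"
  have cvF: "convex (edom f)" "convex_on (edom f) F" using convex_fun_real[OF cf pf] by (auto simp: F_def)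
  have cvG: "convex (edom (conj_fun g))" "convex_on (edom (conj_fun g)) G"
    using conj_props[OF pg] by (auto simp: G_def)
  have lG: "lsc_fun (conj_fun g)" using conj_props[OF pg] by auto
  have cvpsi: "convex (edom \<psi>)" and cvphi: "convex (edom \<phi>)"
    using convex_fun_real[OF cpsi ppsi] convex_fun_real[OF cphi pphi] by auto
  have Ffin: "f x = ereal (F x)" if "x \<in> edom f" for x unfolding F_def by (rule proper_fin[OF pf that])
  have Gfin: "conj_fun g y = ereal (G y)" if "y \<in> edom (conj_fun g)" for y
    using that conj_gt[OF pg, of y] unfolding edom_def G_def by (cases "conj_fun g y") auto
  have Psfin: "\<psi> x = ereal (Ps x)" if "x \<in> edom \<psi>" for x unfolding Ps_def by (rule proper_fin[OF ppsi that])
  have Phfin: "\<phi> x = ereal (Ph x)" if "x \<in> edom \<phi>" for x unfolding Ph_def by (rule proper_fin[OF pphi that])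
  have fgt: "f x > -\<infinity>" for x using pf by (auto simp: proper_fun_def)
  have Ggt: "conj_fun g y > -\<infinity>" for y using conj_gt[OF pg] by auto
  have gradpsi: "GDERIV Ps z :> grad \<psi> z" if "z \<in> interior (edom \<psi>)" for z
    unfolding Ps_def by (rule grad_ok[OF sspsi that])
  have gradphi: "GDERIV Ph z :> grad \<phi> z" if "z \<in> interior (edom \<phi>)" for z
    unfolding Ph_def by (rule grad_ok[OF ssphi that])
  have Dp_nn: "Dp a c \<ge> 0" if "a \<in> edom \<psi>" "c \<in> interior (edom \<psi>)" for a c
    using grad_ineq[OF cpsi ppsi that(2) that(1) grad_ok[OF sspsi that(2)]]
    by (simp add: Dp_def Ps_def)
  have Dq_nn: "Dq a c \<ge> 0" if "a \<in> edom \<phi>" "c \<in> interior (edom \<phi>)" for a c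
    using grad_ineq[OF cphi pphi that(2) that(1) grad_ok[OF ssphi that(2)]]
    by (simp add: Dq_def Ph_def)
  have bpsi: "bregman \<psi> a c = ereal (Dp a c)" if "a \<in> edom \<psi>" "c \<in> interior (edom \<psi>)" for a c
    using that Psfin[OF that(1)] Psfin[of c] interior_subset[of "edom \<psi>"]
    unfolding bregman_def Dp_def by auto
  have bphi: "bregman \<phi> a c = ereal (Dq a c)" if "a \<in> edom \<phi>" "c \<in> interior (edom \<phi>)" for a c
    using that Phfin[OF that(1)] Phfin[of c] interior_subset[of "edom \<phi>"]
    unfolding bregman_def Dq_def by auto
  have xxI: "xx k \<in> interior (edom \<psi>)" for k using x0 x_int by (cases k) auto
  have yyI: "yy k \<in> interior (edom \<phi>)" for k using y0 y_int by (cases k) auto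
  have xxE: "xx k \<in> edom \<psi>" for k using xxI interior_subset by blast
  have yyE: "yy k \<in> edom \<phi>" for k using yyI interior_subset by blast
  have sd1: "v k - transpose A *v yy (Suc k) \<in> subdiff f (s k)"
    and sd2: "u k - (b - A *v s k) \<in> subdiff (conj_fun g) (yy (Suc k))" for k
    using incl[of k] unfolding kkt_def by auto
  have sfE: "s k \<in> edom f" for k using sd1[of k] unfolding subdiff_def edom_def by auto
  have ygE: "yy (Suc k) \<in> edom (conj_fun g)" for k using sd2[of k] unfolding subdiff_def edom_def by auto
  have subF: "F x \<ge> F (s k) + inner (v k - transpose A *v yy (Suc k)) (x - s k)" if "x \<in> edom f" for x k
  proof -
    have "f x \<ge> f (s k) + ereal (inner (v k - transpose A *v yy (Suc k)) (x - s k))"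
      using sd1[of k] unfolding subdiff_def by blast
    then show ?thesis using Ffin[OF that] Ffin[OF sfE[of k]] by simp
  qed
  have subG: "G y \<ge> G (yy (Suc k)) + inner (u k - (b - A *v s k)) (y - yy (Suc k))"
    if "y \<in> edom (conj_fun g)" for y k
  proof -
    have "conj_fun g y \<ge> conj_fun g (yy (Suc k)) + ereal (inner (u k - (b - A *v s k)) (y - yy (Suc k)))"
      using sd2[of k] unfolding subdiff_def by blast
    then show ?thesis using Gfin[OF that] Gfin[OF ygE[of k]] by simp
  qed
  have sig_pos: "\<sigma> k > 0" for k using sigma[of k] sigma0 by linarith
  have Sge: "S K \<ge> real (Suc K) * \<sigma>0" for K
  proof -
    have "(\<Sum>k\<le>K. \<sigma>0) \<le> S K" unfolding S_def by (rule sum_mono) (use sigma in auto)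
    then show ?thesis by simp
  qed
  have Spos: "S K > 0" for K
  proof -
    have "real (Suc K) * \<sigma>0 > 0" using sigma0 by simp
    then show ?thesis using Sge[of K] by linarith
  qed
  have lin: "inner (A *v z - b) w = inner z (transpose A *v w) - inner b w" for z w
  proof -
    have "inner z (transpose A *v w) = inner (A *v z) w" by (metis inner_commute inner_transpose)
    then show ?thesis by (simp add: inner_diff_left)
  qed
  have core: "F (sb K) + inner (A *v sb K - b) y - G y - F x - inner (A *v x - b) (yb K) + G (yb K)
       \<le> (Dp x (xx 0) + Dq y (yy 0)) / S K"
    and sbE: "sb K \<in> edom f" and ybE: "yb K \<in> edom (conj_fun g)"
    if xE: "x \<in> edom \<psi>" "x \<in> edom f" and yE: "y \<in> edom \<phi>" "y \<in> edom (conj_fun g)" for x y K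
  proof -
    define gap where "gap = (\<lambda>k. F (s k) + inner (A *v s k - b) y - G y - F x
        - inner (A *v x - b) (yy (Suc k)) + G (yy (Suc k)))"
    define \<Delta> where "\<Delta> = (\<lambda>k. Dp x (xx k) + Dq y (yy k))"
    have step1: "gap k \<le> inner (v k) (s k - x) + inner (u k) (yy (Suc k) - y)" for k
    proof -
      have h1: "F x \<ge> F (s k) + inner (v k - transpose A *v yy (Suc k)) (x - s k)" by (rule subF[OF xE(2)])
      have h2: "G y \<ge> G (yy (Suc k)) + inner (u k - (b - A *v s k)) (y - yy (Suc k))" by (rule subG[OF yE(2)])
      have e: "inner (transpose A *v yy (Suc k)) (x - s k) = inner (yy (Suc k)) (A *v x) - inner (yy (Suc k)) (A *v s k)"
        by (simp add: dot_lmul_matrix inner_diff_right)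
      show ?thesis using h1 h2 e unfolding gap_def
        by (simp add: inner_diff_left inner_diff_right inner_commute)
    qed
    have step2: "\<sigma> k * (inner (v k) (s k - x) + inner (u k) (yy (Suc k) - y)) \<le> \<Delta> k - \<Delta> (Suc k)" for k
    proof -
      have ev: "\<sigma> k *\<^sub>R v k = grad \<psi> (xx k) - grad \<psi> (xx (Suc k))" using x_upd[of k] by (simp add: algebra_simps)
      have eu: "\<sigma> k *\<^sub>R u k = grad \<phi> (yy k) - grad \<phi> (yy (Suc k))" using y_upd[of k] by (simp add: algebra_simps)
      have id1: "\<sigma> k * inner (v k) (s k - x) = Dp x (xx k) - Dp x (xx (Suc k)) + Dp (s k) (xx (Suc k)) - Dp (s k) (xx k)"
      proof -
        have "\<sigma> k * inner (v k) (s k - x) = inner (\<sigma> k *\<^sub>R v k) (s k - x)" by simp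
        also have "\<dots> = inner (grad \<psi> (xx k) - grad \<psi> (xx (Suc k))) (s k - x)" using ev by simp
        also have "\<dots> = Dp x (xx k) - Dp x (xx (Suc k)) + Dp (s k) (xx (Suc k)) - Dp (s k) (xx k)"
          by (simp add: Dp_def inner_diff_left inner_diff_right algebra_simps)
        finally show ?thesis .
      qed
      have id2: "\<sigma> k * inner (u k) (yy (Suc k) - y) = Dq y (yy k) - Dq y (yy (Suc k)) - Dq (yy (Suc k)) (yy k)"
      proof -
        have "\<sigma> k * inner (u k) (yy (Suc k) - y) = inner (\<sigma> k *\<^sub>R u k) (yy (Suc k) - y)" by simp
        also have "\<dots> = inner (grad \<phi> (yy k) - grad \<phi> (yy (Suc k))) (yy (Suc k) - y)" using eu by simp
        also have "\<dots> = Dq y (yy k) - Dq y (yy (Suc k)) - Dq (yy (Suc k)) (yy k)"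
          by (simp add: Dq_def inner_diff_left inner_diff_right algebra_simps)
        finally show ?thesis .
      qed
      have ine: "Dp (s k) (xx (Suc k)) \<le> \<rho> k * (Dp (s k) (xx k) + Dq (yy (Suc k)) (yy k))"
        using inexact[of k] bpsi[OF s_dom xxI] bphi[OF yyE yyI] by simp
      have nn: "Dp (s k) (xx k) + Dq (yy (Suc k)) (yy k) \<ge> 0"
        using Dp_nn[OF s_dom xxI] Dq_nn[OF yyE yyI] by simp
      have "\<rho> k * (Dp (s k) (xx k) + Dq (yy (Suc k)) (yy k)) \<le> Dp (s k) (xx k) + Dq (yy (Suc k)) (yy k)"
        using rho[of k] nn by (intro mult_left_le_one_le) auto
      then show ?thesis using ine id1 id2 unfolding \<Delta>_def by (simp add: distrib_left)
    qed
    have step3: "(\<Sum>k\<le>K. \<sigma> k * gap k) \<le> \<Delta> 0"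
    proof -
      have "(\<Sum>k\<le>K. \<sigma> k * gap k) \<le> (\<Sum>k\<le>K. \<Delta> k - \<Delta> (Suc k))"
      proof (rule sum_mono)
        fix k
        have "\<sigma> k * gap k \<le> \<sigma> k * (inner (v k) (s k - x) + inner (u k) (yy (Suc k) - y))"
          using step1[of k] sig_pos[of k] by (intro mult_left_mono) auto
        then show "\<sigma> k * gap k \<le> \<Delta> k - \<Delta> (Suc k)" using step2[of k] by linarith
      qed
      also have "\<dots> = \<Delta> 0 - \<Delta> (Suc K)" by (rule sum_telescope)
      also have "\<dots> \<le> \<Delta> 0" using Dp_nn[OF xE(1) xxI[of "Suc K"]] Dq_nn[OF yE(1) yyI[of "Suc K"]] unfolding \<Delta>_def by simp
      finally show ?thesis .
    qed
    define w where "w = (\<lambda>k. \<sigma> k / S K)"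
    have wsum: "(\<Sum>k\<le>K. w k) = 1" using Spos[of K] by (simp add: w_def sum_divide_distrib[symmetric] S_def)
    have wnn: "w k \<ge> 0" for k using sig_pos[of k] Spos[of K] by (simp add: w_def)
    have sbw: "sb K = (\<Sum>k\<le>K. w k *\<^sub>R s k)" unfolding sb_def w_def S_def by (simp add: scaleR_sum_right)
    have ybw: "yb K = (\<Sum>k\<le>K. w k *\<^sub>R yy (Suc k))" unfolding yb_def w_def S_def by (simp add: scaleR_sum_right)
    show sbE': "sb K \<in> edom f" unfolding sbw by (rule convex_sum[OF _ cvF(1) wsum]) (auto intro: wnn sfE)
    show ybE': "yb K \<in> edom (conj_fun g)" unfolding ybw by (rule convex_sum[OF _ cvG(1) wsum]) (auto intro: wnn ygE)
    have J1: "F (sb K) \<le> (\<Sum>k\<le>K. w k * F (s k))"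
      unfolding sbw by (rule convex_on_sum[OF _ _ cvF(2) wsum]) (auto intro: wnn sfE)
    have J2: "G (yb K) \<le> (\<Sum>k\<le>K. w k * G (yy (Suc k)))"
      unfolding ybw by (rule convex_on_sum[OF _ _ cvG(2) wsum]) (auto intro: wnn ygE)
    have L1: "inner (A *v sb K - b) y = (\<Sum>k\<le>K. w k * inner (A *v s k - b) y)"
    proof -
      have "inner (A *v sb K - b) y = (\<Sum>k\<le>K. w k * inner (s k) (transpose A *v y)) - (\<Sum>k\<le>K. w k) * inner b y"
        unfolding lin sbw wsum by (simp add: inner_sum_left)
      also have "\<dots> = (\<Sum>k\<le>K. w k * (inner (s k) (transpose A *v y) - inner b y))"
        by (simp add: sum_distrib_right sum_subtractf right_diff_distrib)
      finally show ?thesis by (simp add: lin)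
    qed
    have L2: "inner (A *v x - b) (yb K) = (\<Sum>k\<le>K. w k * inner (A *v x - b) (yy (Suc k)))"
      unfolding ybw by (simp add: inner_sum_right)
    have "(\<Sum>k\<le>K. w k * gap k) = (\<Sum>k\<le>K. w k * F (s k)) + (\<Sum>k\<le>K. w k * inner (A *v s k - b) y)
        - (\<Sum>k\<le>K. w k) * G y - (\<Sum>k\<le>K. w k) * F x - (\<Sum>k\<le>K. w k * inner (A *v x - b) (yy (Suc k)))
        + (\<Sum>k\<le>K. w k * G (yy (Suc k)))"
      unfolding gap_def by (simp add: distrib_left right_diff_distrib sum.distrib sum_subtractf sum_distrib_right)
    then have eqg: "(\<Sum>k\<le>K. w k * gap k) = (\<Sum>k\<le>K. w k * F (s k)) + (\<Sum>k\<le>K. w k * inner (A *v s k - b) y)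
        - G y - F x - (\<Sum>k\<le>K. w k * inner (A *v x - b) (yy (Suc k)))
        + (\<Sum>k\<le>K. w k * G (yy (Suc k)))" using wsum by simp
    have "(\<Sum>k\<le>K. w k * gap k) = (\<Sum>k\<le>K. \<sigma> k * gap k) / S K"
      by (simp add: w_def sum_divide_distrib)
    also have "\<dots> \<le> \<Delta> 0 / S K" using step3 Spos[of K] by (intro divide_right_mono) auto
    finally have "(\<Sum>k\<le>K. w k * gap k) \<le> \<Delta> 0 / S K" .
    then show "F (sb K) + inner (A *v sb K - b) y - G y - F x - inner (A *v x - b) (yb K) + G (yb K)
       \<le> (Dp x (xx 0) + Dq y (yy 0)) / S K"
      using J1 J2 L1 L2 eqg unfolding \<Delta>_def by linarith
  qed
  obtain xs ys where xsI: "xs \<in> interior (edom \<psi>)" and ysI: "ys \<in> interior (edom \<phi>)"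
    and kne: "kkt f g A b xs ys \<noteq> {}" using qual by blast
  obtain v0 u0 where vu0: "(v0, u0) \<in> kkt f g A b xs ys" using kne by auto
  have xsF: "xs \<in> edom f" using vu0 unfolding kkt_def subdiff_def edom_def by auto
  have ysG: "ys \<in> edom (conj_fun g)" using vu0 unfolding kkt_def subdiff_def edom_def by auto
  have xsE: "xs \<in> edom \<psi>" using xsI interior_subset by blast
  have ysE: "ys \<in> edom \<phi>" using ysI interior_subset by blast
  have sbE': "sb K \<in> edom f" for K by (rule sbE[OF xsE xsF ysE ysG])
  have ybE': "yb K \<in> edom (conj_fun g)" for K by (rule ybE[OF xsE xsF ysE ysG])
  have notG: "conj_fun g w = \<infinity>" if "w \<notin> edom (conj_fun g)" for w
    using that unfolding edom_def by (cases "conj_fun g w") auto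
  have notF: "f z = \<infinity>" if "z \<notin> edom f" for z
    using that unfolding edom_def by (cases "f z") auto
  have lagr_fin: "lagr f g A b z w = ereal (F z + inner (A *v z - b) w - G w)"
    if "z \<in> edom f" "w \<in> edom (conj_fun g)" for z w
    unfolding lagr_def using Ffin[OF that(1)] Gfin[OF that(2)] by simp
  have lagr_minf: "lagr f g A b z w = -\<infinity>" if "z \<in> edom f" "w \<notin> edom (conj_fun g)" for z w
    unfolding lagr_def using Ffin[OF that(1)] notG[OF that(2)] by simp
  have lagr_inf: "lagr f g A b z w = \<infinity>" if "z \<notin> edom f" for z w
    unfolding lagr_def using notF[OF that] by simp
  have lagr_lt: "lagr f g A b z w < \<infinity>" if "z \<in> edom f" for z w
    by (cases "w \<in> edom (conj_fun g)") (simp_all add: lagr_fin lagr_minf that)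
  have P1: "\<forall>x \<in> edom \<psi>. \<forall>y \<in> edom \<phi>. \<forall>K.
            lagr f g A b (sb K) y - lagr f g A b x (yb K)
              \<le> (bregman \<psi> x (xx 0) + bregman \<phi> y (yy 0)) / ereal (\<Sum>k\<le>K. \<sigma> k)"
  proof (intro ballI allI)
    fix x y K assume xE: "x \<in> edom \<psi>" and yE: "y \<in> edom \<phi>"
    consider (a) "x \<notin> edom f" | (b) "x \<in> edom f" "y \<notin> edom (conj_fun g)"
      | (c) "x \<in> edom f" "y \<in> edom (conj_fun g)" by blast
    then show "lagr f g A b (sb K) y - lagr f g A b x (yb K)
              \<le> (bregman \<psi> x (xx 0) + bregman \<phi> y (yy 0)) / ereal (\<Sum>k\<le>K. \<sigma> k)"
    proof cases
      case a
      have "lagr f g A b (sb K) y < \<infinity>" by (rule lagr_lt[OF sbE'])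
      then have "lagr f g A b (sb K) y - lagr f g A b x (yb K) = -\<infinity>"
        using lagr_inf[OF a] by (cases "lagr f g A b (sb K) y") auto
      then show ?thesis by simp
    next
      case b
      have "lagr f g A b (sb K) y - lagr f g A b x (yb K) = -\<infinity>"
        using lagr_minf[OF sbE' b(2)] lagr_fin[OF b(1) ybE'] by simp
      then show ?thesis by simp
    next
      case c
      have co: "F (sb K) + inner (A *v sb K - b) y - G y - F x - inner (A *v x - b) (yb K) + G (yb K)
         \<le> (Dp x (xx 0) + Dq y (yy 0)) / S K" by (rule core[OF xE c(1) yE c(2)])
      have "lagr f g A b (sb K) y - lagr f g A b x (yb K) =
          ereal ((F (sb K) + inner (A *v sb K - b) y - G y) - (F x + inner (A *v x - b) (yb K) - G (yb K)))"
        using lagr_fin[OF sbE' c(2)] lagr_fin[OF c(1) ybE'] by simp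
      moreover have "(bregman \<psi> x (xx 0) + bregman \<phi> y (yy 0)) / ereal (\<Sum>k\<le>K. \<sigma> k)
          = ereal ((Dp x (xx 0) + Dq y (yy 0)) / S K)"
        using bpsi[OF xE xxI] bphi[OF yE yyI] Spos[of K] by (simp add: S_def)
      ultimately show ?thesis using co by simp
    qed
  qed
  have P2: "(\<forall>p q. (\<exists>r. strict_mono r \<and> (\<lambda>K. (sb (r K), yb (r K))) \<longlonglongrightarrow> (p, q)) \<longrightarrow>
             (\<forall>x y. lagr f g A b p y \<le> lagr f g A b x q))"
    if inclF: "edom f \<subseteq> closure (edom \<psi>)" and inclG: "edom (conj_fun g) \<subseteq> closure (edom \<phi>)"
  proof (rule allI, rule allI, rule impI)
    fix p q assume "\<exists>r. strict_mono r \<and> (\<lambda>K. (sb (r K), yb (r K))) \<longlonglongrightarrow> (p, q)"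
    then obtain r where r: "strict_mono r" and lim: "(\<lambda>K. (sb (r K), yb (r K))) \<longlonglongrightarrow> (p, q)" by blast
    have hp: "(\<lambda>K. sb (r K)) \<longlonglongrightarrow> p" using tendsto_fst[OF lim] by simp
    have hq: "(\<lambda>K. yb (r K)) \<longlonglongrightarrow> q" using tendsto_snd[OF lim] by simp
    have Sinv: "(\<lambda>K. 1 / S K) \<longlonglongrightarrow> 0"
    proof (rule real_tendsto_sandwich)
      show "eventually (\<lambda>K. 0 \<le> 1 / S K) sequentially" using Spos by (auto intro!: always_eventually less_imp_le)
      show "eventually (\<lambda>K. 1 / S K \<le> (1 / \<sigma>0) * inverse (real (Suc K))) sequentially"
      proof (rule always_eventually, rule allI)
        fix K
        have "1 / S K \<le> 1 / (real (Suc K) * \<sigma>0)"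
          using Sge[of K] sigma0 Spos[of K] by (intro divide_left_mono) auto
        then show "1 / S K \<le> (1 / \<sigma>0) * inverse (real (Suc K))" by (simp add: field_simps)
      qed
      show "(\<lambda>K. 0) \<longlonglongrightarrow> (0::real)" by simp
      have "(\<lambda>K. (1 / \<sigma>0) * inverse (real (Suc K))) \<longlonglongrightarrow> (1 / \<sigma>0) * 0"
        by (rule tendsto_mult[OF tendsto_const LIMSEQ_inverse_real_of_nat])
      then show "(\<lambda>K. (1 / \<sigma>0) * inverse (real (Suc K))) \<longlonglongrightarrow> 0" by simp
    qed
    have Sr: "(\<lambda>K. 1 / S (r K)) \<longlonglongrightarrow> 0" using LIMSEQ_subseq_LIMSEQ[OF Sinv r] by (simp add: o_def)
    have C1: "p \<in> edom f \<and> q \<in> edom (conj_fun g) \<and>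
        F p + inner (A *v p - b) y - G y \<le> F x + inner (A *v x - b) q - G q"
      if xE: "x \<in> edom \<psi>" "x \<in> edom f" and yE: "y \<in> edom \<phi>" "y \<in> edom (conj_fun g)" for x y
    proof -
      define \<Delta> where "\<Delta> = Dp x (xx 0) + Dq y (yy 0)"
      define c where "c = F x + G y + inner (A *v x - b) q - (inner p (transpose A *v y) - inner b y)"
      define cK where "cK = (\<lambda>K. F x + G y + inner (A *v x - b) (yb (r K))
          - (inner (sb (r K)) (transpose A *v y) - inner b y) + \<Delta> * (1 / S (r K)))"
      have ab: "F (sb (r K)) + G (yb (r K)) \<le> cK K" for K
      proof -
        have "\<Delta> * (1 / S (r K)) = \<Delta> / S (r K)" by simp
        then show ?thesis using core[OF xE yE, of "r K"] unfolding cK_def \<Delta>_def lin by linarith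
      qed
      have "cK \<longlonglongrightarrow> F x + G y + inner (A *v x - b) q - (inner p (transpose A *v y) - inner b y) + \<Delta> * 0"
        unfolding cK_def by (intro tendsto_intros hp hq Sr)
      then have cKlim: "cK \<longlonglongrightarrow> c" by (simp add: c_def)
      have sum_le: "f p + conj_fun g q \<le> ereal c"
      proof (rule ccontr)
        assume "\<not> f p + conj_fun g q \<le> ereal c"
        then have "ereal c < f p + conj_fun g q" by simp
        then obtain \<alpha> \<beta> where ab1: "ereal \<alpha> < f p" and ab2: "ereal \<beta> < conj_fun g q" and ab3: "c < \<alpha> + \<beta>"
          using ereal_split[OF fgt Ggt] by blast
        have e1: "eventually (\<lambda>K. ereal \<alpha> < f (sb (r K))) sequentially" by (rule lsc_ev[OF lf hp ab1])
        have e2: "eventually (\<lambda>K. ereal \<beta> < conj_fun g (yb (r K))) sequentially" by (rule lsc_ev[OF lG hq ab2])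
        have e3: "eventually (\<lambda>K. cK K < \<alpha> + \<beta>) sequentially" by (rule order_tendstoD(2)[OF cKlim ab3])
        have "eventually (\<lambda>K. False) sequentially"
          using e1 e2 e3
        proof eventually_elim
          case (elim K)
          then have "\<alpha> < F (sb (r K))" "\<beta> < G (yb (r K))" using Ffin[OF sbE'] Gfin[OF ybE'] by auto
          then show False using ab[of K] elim(3) by linarith
        qed
        then show False by simp
      qed
      have pE: "p \<in> edom f"
      proof (rule ccontr)
        assume "p \<notin> edom f"
        then have "f p = \<infinity>" by (rule notF)
        then show False using sum_le Ggt[of q] by simp
      qed
      have qE: "q \<in> edom (conj_fun g)"
      proof (rule ccontr)
        assume "q \<notin> edom (conj_fun g)"
        then have "conj_fun g q = \<infinity>" by (rule notG)
        then show False using sum_le fgt[of p] Ffin[OF pE] by simp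
      qed
      have "F p + G q \<le> c" using sum_le Ffin[OF pE] Gfin[OF qE] by simp
      then show ?thesis using pE qE unfolding c_def lin by linarith
    qed
    have pE: "p \<in> edom f" and qE: "q \<in> edom (conj_fun g)" using C1[OF xsE xsF ysE ysG] by auto
    have C2: "lagr f g A b p y \<le> lagr f g A b x q" if xE: "x \<in> edom \<psi>" "x \<in> edom f" for x y
    proof (cases "y \<in> edom (conj_fun g)")
      case False
      then show ?thesis using lagr_minf[OF pE False] by simp
    next
      case True
      define R0 where "R0 = F x + inner (A *v x - b) q - G q"
      define M where "M = inner (A *v p - b) (y - ys) + G ys - G y"
      have "F p + inner (A *v p - b) y - G y \<le> R0"
      proof (rule eps_lemma)
        fix t :: real assume t: "0 < t" "t \<le> 1"
        define yt where "yt = y - t *\<^sub>R (y - ys)"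
        have ytI: "yt \<in> interior (edom \<phi>)" unfolding yt_def
          by (rule mem_interior_closure_convex_shrink[OF cvphi ysI _ t]) (use inclG True in auto)
        have ytE: "yt \<in> edom \<phi>" using ytI interior_subset by blast
        have yteq: "yt = (1 - t) *\<^sub>R y + t *\<^sub>R ys" by (simp add: yt_def algebra_simps)
        have ytG: "yt \<in> edom (conj_fun g)" unfolding yteq
          using cvG(1) True ysG t unfolding convex_alt by auto
        have Gyt: "G yt \<le> (1 - t) * G y + t * G ys"
          unfolding yteq using convex_onD[OF cvG(2), of t y ys] True ysG t by simp
        have c1: "F p + inner (A *v p - b) yt - G yt \<le> R0" using C1[OF xE ytE ytG] unfolding R0_def by blast
        have "inner (A *v p - b) yt = inner (A *v p - b) y - t * inner (A *v p - b) (y - ys)"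
          by (simp add: yt_def inner_diff_right)
        then show "F p + inner (A *v p - b) y - G y \<le> R0 + t * M"
          using c1 Gyt unfolding M_def by (simp add: algebra_simps)
      qed
      then show ?thesis using lagr_fin[OF pE True] lagr_fin[OF xE(2) qE] unfolding R0_def by simp
    qed
    show "\<forall>x y. lagr f g A b p y \<le> lagr f g A b x q"
    proof (intro allI)
      fix x y
      show "lagr f g A b p y \<le> lagr f g A b x q"
      proof (cases "x \<in> edom f")
        case False
        then show ?thesis using lagr_inf[OF False] by simp
      next
        case True
        show ?thesis
        proof (cases "y \<in> edom (conj_fun g)")
          case False
          then show ?thesis using lagr_minf[OF pE False] by simp
        next
          case yG: True
          define R0 where "R0 = F x + inner (A *v x - b) q - G q"
          define M where "M = F xs - F x - inner (A *v (x - xs)) q"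
          have "F p + inner (A *v p - b) y - G y \<le> R0"
          proof (rule eps_lemma)
            fix t :: real assume t: "0 < t" "t \<le> 1"
            define xt where "xt = x - t *\<^sub>R (x - xs)"
            have xtI: "xt \<in> interior (edom \<psi>)" unfolding xt_def
              by (rule mem_interior_closure_convex_shrink[OF cvpsi xsI _ t]) (use inclF True in auto)
            have xtE: "xt \<in> edom \<psi>" using xtI interior_subset by blast
            have xteq: "xt = (1 - t) *\<^sub>R x + t *\<^sub>R xs" by (simp add: xt_def algebra_simps)
            have xtF: "xt \<in> edom f" unfolding xteq
              using cvF(1) True xsF t unfolding convex_alt by auto
            have Fxt: "F xt \<le> (1 - t) * F x + t * F xs"
              unfolding xteq using convex_onD[OF cvF(2), of t x xs] True xsF t by simp
            have c2: "lagr f g A b p y \<le> lagr f g A b xt q" by (rule C2[OF xtE xtF])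
            then have c2': "F p + inner (A *v p - b) y - G y \<le> F xt + inner (A *v xt - b) q - G q"
              using lagr_fin[OF pE yG] lagr_fin[OF xtF qE] by simp
            have "inner (A *v xt - b) q = inner (A *v x - b) q - t * inner (A *v (x - xs)) q"
              by (simp add: xt_def matrix_vector_mult_diff_distrib inner_diff_left
                  matrix_vector_mult_scaleR)
            then show "F p + inner (A *v p - b) y - G y \<le> R0 + t * M"
              using c2' Fxt unfolding M_def R0_def by (simp add: algebra_simps)
          qed
          then show ?thesis using lagr_fin[OF pE yG] lagr_fin[OF True qE] unfolding R0_def by simp
        qed
      qed
    qed
  qed
  show ?thesis using P1 P2 by blast
qed

end
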